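(* There is a function $\delta(n)\to0$ such that for every directed graph $G=(V,E)$ with $n$ nodes and every initial state, the convergence time of the \textsc{Random Pick} process is at most $4D\Delta_+\log_2 n$ with probability at least $1-\delta(n)$; and if $G$ is undirected, the convergence time is at most $20n\log_2 n$ with probability at least $1-\delta(n)$.
   Context: $G=(V,E)$ directed, $n=|V|$, $\Gamma_+(v)=\{u:(v,u)\in E\}$, $d_+(v)=|\Gamma_+(v)|$, $\Delta_+=\max_v d_+(v)$. $d(v,u)$ is the length of a shortest directed path from $v$ to $u$ ($\infty$ if none), and $D=\max\{d(v,u): d(v,u)\ne\infty\}$. $G$ is undirected if $(v,u)\in E\iff(u,v)\in E$. A state is a map $V\to\{b,r,u\}$ (blue, red, uncolored); colored means blue or red. \textsc{Random Pick} process: in each round $t=1,2,\dots$, every node $v$ with $d_+(v)\ge1$ picks an out-neighbor $ps_t(v)$ uniformly at random, independently; $\mathcal{S}_t(v)=\mathcal{S}_{t-1}(ps_t(v))$ if $\mathcal{S}_{t-1}(v)=u$ and $\mathcal{S}_{t-1}(ps_t(v))\ne u$, else $\mathcal{S}_t(v)=\mathcal{S}_{t-1}(v)$. A state is stable if no uncolored node has a colored out-neighbor. The convergence time is the smallest $t\ge0$ such that $\mathcal{S}_t$ is stable. *)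

theory Defs
  imports "HOL-Probability.Probability"
begin

datatype color = Blue | Red | Uncolored

type_synonym 'a state = "'a \<Rightarrow> color"

definition out_nbrs :: "('a \<times> 'a) set \<Rightarrow> 'a \<Rightarrow> 'a set" where
  "out_nbrs E v = {u. (v, u) \<in> E}"

definition out_deg :: "('a \<times> 'a) set \<Rightarrow> 'a \<Rightarrow> nat" where
  "out_deg E v = card (out_nbrs E v)"

definition max_out_deg :: "'a set \<Rightarrow> ('a \<times> 'a) set \<Rightarrow> nat" where
  "max_out_deg V E = Max (out_deg E ` V)"

definition is_dist :: "('a \<times> 'a) set \<Rightarrow> 'a \<Rightarrow> 'a \<Rightarrow> nat \<Rightarrow> bool" where
  "is_dist E v u k \<longleftrightarrow> (v, u) \<in> E ^^ k \<and> (\<forall>j<k. (v, u) \<notin> E ^^ j)"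

definition diam :: "'a set \<Rightarrow> ('a \<times> 'a) set \<Rightarrow> nat" where
  "diam V E = Max {k. \<exists>v\<in>V. \<exists>u\<in>V. is_dist E v u k}"

definition undirected :: "('a \<times> 'a) set \<Rightarrow> bool" where
  "undirected E \<longleftrightarrow> (\<forall>v u. (v, u) \<in> E \<longleftrightarrow> (u, v) \<in> E)"

definition stable :: "'a set \<Rightarrow> ('a \<times> 'a) set \<Rightarrow> 'a state \<Rightarrow> bool" where
  "stable V E S \<longleftrightarrow> (\<forall>v\<in>V. S v = Uncolored \<longrightarrow> (\<forall>u\<in>out_nbrs E v. S u = Uncolored))"

text \<open>Deterministic evolution of Random Pick given the picks:
  ps (t, v) is the out-neighbour picked by v in round t (only used if d_+(v) >= 1).\<close>
fun rp_run :: "'a set \<Rightarrow> ('a \<times> 'a) set \<Rightarrow> 'a state \<Rightarrow> (nat \<times> 'a \<Rightarrow> 'a) \<Rightarrow> nat \<Rightarrow> 'a state" where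
  "rp_run V E S0 ps 0 = S0"
| "rp_run V E S0 ps (Suc t) =
     (let S = rp_run V E S0 ps t in
      (\<lambda>v. if v \<in> V \<and> out_nbrs E v \<noteq> {} \<and> S v = Uncolored \<and> S (ps (Suc t, v)) \<noteq> Uncolored
           then S (ps (Suc t, v)) else S v))"

definition picks_pmf :: "'a set \<Rightarrow> ('a \<times> 'a) set \<Rightarrow> nat \<Rightarrow> (nat \<times> 'a \<Rightarrow> 'a) pmf" where
  "picks_pmf V E T =
     Pi_pmf ({1..T} \<times> {v\<in>V. out_nbrs E v \<noteq> {}}) undefined
            (\<lambda>(t, v). pmf_of_set (out_nbrs E v))"

text \<open>Probability that the convergence time (least t with S_t stable) is at most x.
  This event only depends on the picks in rounds 1..floor x.\<close>
definition conv_prob :: "'a set \<Rightarrow> ('a \<times> 'a) set \<Rightarrow> 'a state \<Rightarrow> real \<Rightarrow> real" where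
  "conv_prob V E S0 x =
     measure_pmf.prob (picks_pmf V E (nat \<lfloor>x\<rfloor>))
       {ps. \<exists>t. real t \<le> x \<and> stable V E (rp_run V E S0 ps t)}"

end

theory Submission
  imports Defs
begin

definition act :: "'a set \<Rightarrow> ('a \<times> 'a) set \<Rightarrow> 'a set" where
  "act V E = {v\<in>V. out_nbrs E v \<noteq> {}}"

fun jc :: "(nat \<Rightarrow> 'a) \<Rightarrow> nat \<Rightarrow> (nat \<times> 'a \<Rightarrow> 'a) \<Rightarrow> nat \<Rightarrow> nat" where
  "jc p k ps 0 = k"
| "jc p k ps (Suc t) = (let j = jc p k ps t in
     if 0 < j \<and> ps (Suc t, p (j - 1)) = p j then j - 1 else j)"

lemma jc_le: "jc p k ps t \<le> k"
  by (induction t) (auto simp: Let_def)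

lemma colored_Suc:
  "rp_run V E S0 ps t v \<noteq> Uncolored \<Longrightarrow> rp_run V E S0 ps (Suc t) v \<noteq> Uncolored"
  by (auto simp: Let_def)

lemma rp_run_Suc_eq: "rp_run V E S0 ps (Suc t) v =
  (if v \<in> V \<and> out_nbrs E v \<noteq> {} \<and> rp_run V E S0 ps t v = Uncolored
      \<and> rp_run V E S0 ps t (ps (Suc t, v)) \<noteq> Uncolored
   then rp_run V E S0 ps t (ps (Suc t, v)) else rp_run V E S0 ps t v)"
  by (simp add: Let_def)

lemma out_nbrs_sub: "E \<subseteq> V \<times> V \<Longrightarrow> out_nbrs E v \<subseteq> V"
  by (auto simp: out_nbrs_def)

lemma chain_colored:
  assumes EV: "E \<subseteq> V \<times> V" and path: "\<forall>i<k. (p i, p (Suc i)) \<in> E"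
    and col: "S0 (p k) \<noteq> Uncolored"
  shows "\<forall>i. jc p k ps t \<le> i \<and> i \<le> k \<longrightarrow> rp_run V E S0 ps t (p i) \<noteq> Uncolored"
proof (induction t)
  case 0
  then show ?case using col by auto
next
  case (Suc t)
  define j where "j = jc p k ps t"
  have jk: "j \<le> k" unfolding j_def by (rule jc_le)
  show ?case
  proof (cases "0 < j \<and> ps (Suc t, p (j - 1)) = p j")
    case True
    have jc: "jc p k ps (Suc t) = j - 1" using True by (simp add: j_def[symmetric] Let_def)
    have jm: "j - 1 < k" using True jk by (cases j) auto
    hence "(p (j-1), p (Suc (j-1))) \<in> E" using path by blast
    hence e: "(p (j-1), p j) \<in> E" using True by simp
    hence inV: "p (j-1) \<in> V" using EV by auto
    have ne: "out_nbrs E (p (j-1)) \<noteq> {}" using e by (auto simp: out_nbrs_def)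
    have IH: "\<forall>i. j \<le> i \<and> i \<le> k \<longrightarrow> rp_run V E S0 ps t (p i) \<noteq> Uncolored"
      using Suc.IH unfolding j_def .
    have cj: "rp_run V E S0 ps t (p j) \<noteq> Uncolored" using IH jk by blast
    have pick: "ps (Suc t, p (j-1)) = p j" using True by simp
    have "rp_run V E S0 ps (Suc t) (p (j-1)) \<noteq> Uncolored"
    proof (cases "rp_run V E S0 ps t (p (j-1)) = Uncolored")
      case True
      have "rp_run V E S0 ps (Suc t) (p (j-1)) = rp_run V E S0 ps t (ps (Suc t, p (j-1)))"
        using True inV ne cj pick by (simp only: rp_run_Suc_eq) simp
      then show ?thesis using cj pick by simp
    next
      case False then show ?thesis by (rule colored_Suc)
    qed
    moreover have "\<forall>i. j \<le> i \<and> i \<le> k \<longrightarrow> rp_run V E S0 ps (Suc t) (p i) \<noteq> Uncolored"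
    proof (intro allI impI)
      fix i assume "j \<le> i \<and> i \<le> k"
      then show "rp_run V E S0 ps (Suc t) (p i) \<noteq> Uncolored" by (intro colored_Suc) (use IH in blast)
    qed
    ultimately show ?thesis unfolding jc
    proof (intro allI impI)
      fix i assume A: "rp_run V E S0 ps (Suc t) (p (j - 1)) \<noteq> Uncolored"
        and B: "\<forall>i. j \<le> i \<and> i \<le> k \<longrightarrow> rp_run V E S0 ps (Suc t) (p i) \<noteq> Uncolored"
        and i: "j - 1 \<le> i \<and> i \<le> k"
      show "rp_run V E S0 ps (Suc t) (p i) \<noteq> Uncolored"
      proof (cases "i = j - 1")
        case True then show ?thesis using A by simp
      next
        case False then have "j \<le> i" using i by arith
        then show ?thesis using B i by blast
      qed
    qed
  next
    case False
    have jc: "jc p k ps (Suc t) = j" using False by (auto simp: j_def[symmetric] Let_def)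
    have IH: "\<forall>i. j \<le> i \<and> i \<le> k \<longrightarrow> rp_run V E S0 ps t (p i) \<noteq> Uncolored"
      using Suc.IH unfolding j_def .
    show ?thesis unfolding jc
    proof (intro allI impI)
      fix i assume "j \<le> i \<and> i \<le> k"
      then show "rp_run V E S0 ps (Suc t) (p i) \<noteq> Uncolored" by (intro colored_Suc) (use IH in blast)
    qed
  qed
qed

lemma finite_act: "finite V \<Longrightarrow> finite (act V E)" by (simp add: act_def)

lemma support_pick:
  assumes fin: "finite V" and EV: "E \<subseteq> V \<times> V"
    and ps: "ps \<in> set_pmf (picks_pmf V E T)" and t: "1 \<le> t" "t \<le> T"
    and v: "v \<in> V" "out_nbrs E v \<noteq> {}"
  shows "ps (t, v) \<in> out_nbrs E v"
proof -
  define A where "A = {1..T} \<times> {v\<in>V. out_nbrs E v \<noteq> {}}"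
  define Pf where "Pf = (\<lambda>(t::nat, v). pmf_of_set (out_nbrs E v))"
  have fA: "finite A" using fin unfolding A_def by simp
  have "ps \<in> set_pmf (Pi_pmf A undefined Pf)" using ps unfolding picks_pmf_def A_def Pf_def .
  hence "ps \<in> PiE_dflt A undefined (set_pmf \<circ> Pf)" by (simp only: set_Pi_pmf[OF fA])
  hence h: "\<forall>x. (x \<in> A \<longrightarrow> ps x \<in> (set_pmf \<circ> Pf) x)" unfolding PiE_dflt_def by blast
  have tv: "(t, v) \<in> A" unfolding A_def using t v by simp
  have "ps (t, v) \<in> set_pmf (pmf_of_set (out_nbrs E v))" using h tv unfolding Pf_def by simp
  moreover have "finite (out_nbrs E v)" using out_nbrs_sub[OF EV] fin by (rule finite_subset)
  ultimately show ?thesis using v by simp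
qed

definition reachC :: "'a set \<Rightarrow> ('a \<times> 'a) set \<Rightarrow> 'a state \<Rightarrow> 'a \<Rightarrow> bool" where
  "reachC V E S0 v \<longleftrightarrow> (\<exists>w\<in>V. S0 w \<noteq> Uncolored \<and> (v, w) \<in> E\<^sup>*)"

lemma reach_inv:
  assumes fin: "finite V" and EV: "E \<subseteq> V \<times> V"
    and ps: "ps \<in> set_pmf (picks_pmf V E T)"
  shows "t \<le> T \<Longrightarrow> v \<in> V \<Longrightarrow> rp_run V E S0 ps t v \<noteq> Uncolored \<Longrightarrow> reachC V E S0 v"
proof (induction t arbitrary: v)
  case 0
  then show ?case by (auto simp: reachC_def)
next
  case (Suc t)
  show ?case
  proof (cases "out_nbrs E v \<noteq> {} \<and> rp_run V E S0 ps t v = Uncolored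
         \<and> rp_run V E S0 ps t (ps (Suc t, v)) \<noteq> Uncolored")
    case True
    have u: "ps (Suc t, v) \<in> out_nbrs E v"
      using support_pick[OF fin EV ps, of "Suc t" v] Suc.prems True by auto
    hence uV: "ps (Suc t, v) \<in> V" using EV by (auto simp: out_nbrs_def)
    have "reachC V E S0 (ps (Suc t, v))" using Suc.IH[OF _ uV] Suc.prems True by auto
    then obtain w where w: "w \<in> V" "S0 w \<noteq> Uncolored" "(ps (Suc t, v), w) \<in> E\<^sup>*"
      unfolding reachC_def by blast
    have "(v, ps (Suc t, v)) \<in> E" using u by (simp add: out_nbrs_def)
    hence "(v, w) \<in> E\<^sup>*" using w(3) by (rule converse_rtrancl_into_rtrancl)
    then show ?thesis using w unfolding reachC_def by blast
  next
    case False
    hence "rp_run V E S0 ps t v \<noteq> Uncolored" using Suc.prems by (auto simp: Let_def)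
    then show ?thesis using Suc by auto
  qed
qed

lemma stable_if:
  assumes fin: "finite V" and EV: "E \<subseteq> V \<times> V"
    and ps: "ps \<in> set_pmf (picks_pmf V E T)"
    and all: "\<forall>v\<in>V. reachC V E S0 v \<longrightarrow> rp_run V E S0 ps T v \<noteq> Uncolored"
  shows "stable V E (rp_run V E S0 ps T)"
  unfolding stable_def
proof (intro ballI impI)
  fix v u assume v: "v \<in> V" and un: "rp_run V E S0 ps T v = Uncolored" and u: "u \<in> out_nbrs E v"
  have uV: "u \<in> V" using u EV by (auto simp: out_nbrs_def)
  show "rp_run V E S0 ps T u = Uncolored"
  proof (rule ccontr)
    assume "rp_run V E S0 ps T u \<noteq> Uncolored"
    hence "reachC V E S0 u" using reach_inv[OF fin EV ps order.refl uV] by blast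
    then obtain w where w: "w \<in> V" "S0 w \<noteq> Uncolored" "(u, w) \<in> E\<^sup>*"
      unfolding reachC_def by blast
    have "(v, u) \<in> E" using u by (simp add: out_nbrs_def)
    hence "(v, w) \<in> E\<^sup>*" using w(3) by (rule converse_rtrancl_into_rtrancl)
    hence "reachC V E S0 v" using w unfolding reachC_def by blast
    thus False using all v un by blast
  qed
qed


definition Pfun :: "('a \<times> 'a) set \<Rightarrow> nat \<times> 'a \<Rightarrow> 'a pmf" where
  "Pfun E = (\<lambda>(t, v). pmf_of_set (out_nbrs E v))"

lemma picks_Suc:
  assumes fin: "finite V"
  shows "picks_pmf V E (Suc T) =
     map_pmf (\<lambda>(f,g) x. if x \<in> {1..T} \<times> act V E then f x else g x)
       (pair_pmf (picks_pmf V E T) (Pi_pmf ({Suc T} \<times> act V E) undefined (Pfun E)))"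
proof -
  have eq: "{1..Suc T} \<times> act V E = {1..T} \<times> act V E \<union> {Suc T} \<times> act V E" by auto
  have "picks_pmf V E (Suc T) = Pi_pmf ({1..T} \<times> act V E \<union> {Suc T} \<times> act V E) undefined (Pfun E)"
    unfolding picks_pmf_def act_def[symmetric] Pfun_def eq ..
  also have "\<dots> = map_pmf (\<lambda>(f,g) x. if x \<in> {1..T} \<times> act V E then f x else g x)
       (pair_pmf (Pi_pmf ({1..T} \<times> act V E) undefined (Pfun E)) (Pi_pmf ({Suc T} \<times> act V E) undefined (Pfun E)))"
    by (rule Pi_pmf_union) (auto simp: finite_act fin)
  finally show ?thesis unfolding picks_pmf_def act_def[symmetric] Pfun_def .
qed

lemma component_int:
  assumes fin: "finite V" and u: "u \<in> act V E"
  shows "(\<integral>\<^sup>+g. h (g (Suc T, u)) \<partial>measure_pmf (Pi_pmf ({Suc T} \<times> act V E) undefined (Pfun E)))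
       = (\<integral>\<^sup>+y. h y \<partial>measure_pmf (pmf_of_set (out_nbrs E u)))"
proof -
  have "map_pmf (\<lambda>g. g (Suc T, u)) (Pi_pmf ({Suc T} \<times> act V E) undefined (Pfun E))
        = pmf_of_set (out_nbrs E u)"
    by (subst Pi_pmf_component) (auto simp: finite_act fin u Pfun_def)
  hence "(\<integral>\<^sup>+y. h y \<partial>measure_pmf (pmf_of_set (out_nbrs E u)))
       = (\<integral>\<^sup>+y. h y \<partial>measure_pmf (map_pmf (\<lambda>g. g (Suc T, u)) (Pi_pmf ({Suc T} \<times> act V E) undefined (Pfun E))))"
    by simp
  also have "\<dots> = (\<integral>\<^sup>+g. h (g (Suc T, u)) \<partial>measure_pmf (Pi_pmf ({Suc T} \<times> act V E) undefined (Pfun E)))"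
    by (rule nn_integral_map_pmf)
  finally show ?thesis by simp
qed

lemma jc_cong:
  assumes "\<forall>t'\<in>{1..t}. \<forall>i<k. ps (t', p i) = ps' (t', p i)"
  shows "jc p k ps t = jc p k ps' t"
  using assms
proof (induction t)
  case 0 then show ?case by simp
next
  case (Suc t)
  have IH: "jc p k ps t = jc p k ps' t" using Suc by auto
  define j where "j = jc p k ps t"
  have jk: "j \<le> k" unfolding j_def by (rule jc_le)
  have "0 < j \<Longrightarrow> ps (Suc t, p (j - 1)) = ps' (Suc t, p (j - 1))"
    using Suc.prems jk by auto
  then show ?case using IH by (auto simp: Let_def j_def[symmetric])
qed

definition phi :: "(nat \<Rightarrow> real) \<Rightarrow> nat \<Rightarrow> real" where
  "phi w j = (if j = 0 then 0 else (\<Prod>i<j. w i))"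

lemma step_ineq:
  fixes d Q w \<alpha> :: real
  assumes d: "d \<ge> 1" and Q: "Q \<ge> 0" and P: "0 \<le> P" "P \<le> Q" and ad: "\<alpha> * d < 1"
    and w: "w = 1 / (1 - \<alpha> * d)" and a: "0 \<le> \<alpha>"
  shows "(P + (d - 1) * (Q * w)) / d \<le> (1 - \<alpha>) * (Q * w)"
proof -
  have pos: "1 - \<alpha> * d > 0" using ad by simp
  have "(P + (d - 1) * (Q * w)) / d \<le> (Q + (d - 1) * (Q * w)) / d"
    using P d by (simp add: divide_right_mono)
  also have "\<dots> = (1 - \<alpha>) * (Q * w)"
    using pos d unfolding w by (simp add: field_simps)
  finally show ?thesis .
qed

lemma sum_split_pick:
  assumes "finite N" "a \<in> N"
  shows "(\<Sum>y\<in>N. f (if y = a then x1 else x2)) = f x1 + (real (card N) - 1) * f (x2::nat)"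
proof -
  have "(\<Sum>y\<in>N. f (if y = a then x1 else x2)) = f x1 + (\<Sum>y\<in>N - {a}. f (if y = a then x1 else x2))"
    using assms by (simp add: sum.remove)
  also have "(\<Sum>y\<in>N - {a}. f (if y = a then x1 else x2)) = (\<Sum>y\<in>N - {a}. f x2)"
    by (rule sum.cong) auto
  also have "\<dots> = (real (card N) - 1) * f x2"
    proof -
    have "card N \<ge> 1" using assms by (metis One_nat_def Suc_leI card_gt_0_iff empty_iff)
    then show ?thesis using assms by (simp add: card_Diff_singleton of_nat_diff)
  qed
  finally show ?thesis .
qed


lemma phi_nonneg: "(\<forall>i<k. w i \<ge> 0) \<Longrightarrow> j \<le> k \<Longrightarrow> phi w j \<ge> 0"
  unfolding phi_def by (auto intro!: prod_nonneg)

lemma chain_bound: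
  assumes fin: "finite V" and EV: "E \<subseteq> V \<times> V"
    and path: "\<forall>i<k. (p i, p (Suc i)) \<in> E"
    and a0: "0 \<le> \<alpha>" and a1: "\<alpha> \<le> 1"
    and ad: "\<forall>i<k. \<alpha> * real (out_deg E (p i)) < 1"
    and w: "\<forall>i<k. w i = 1 / (1 - \<alpha> * real (out_deg E (p i)))"
  shows "(\<integral>\<^sup>+ps. ennreal (phi w (jc p k ps T)) \<partial>measure_pmf (picks_pmf V E T))
           \<le> ennreal ((1 - \<alpha>) ^ T * phi w k)"
proof (induction T)
  case 0
  have "picks_pmf V E 0 = return_pmf (\<lambda>_. undefined)" by (simp add: picks_pmf_def)
  then show ?case by simp
next
  case (Suc T)
  have wpos: "\<forall>i<k. w i \<ge> 0" using w ad by auto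
  have pact: "\<And>i. i < k \<Longrightarrow> p i \<in> act V E"
    using path EV unfolding act_def out_nbrs_def by blast
  define M where "M = picks_pmf V E T"
  define R where "R = Pi_pmf ({Suc T} \<times> act V E) undefined (Pfun E)"
  define mrg :: "(nat \<times> 'a \<Rightarrow> 'a) \<times> (nat \<times> 'a \<Rightarrow> 'a) \<Rightarrow> nat \<times> 'a \<Rightarrow> 'a"
    where "mrg = (\<lambda>(f,g) x. if x \<in> {1..T} \<times> act V E then f x else g x)"
  define F where "F = (\<lambda>ps. ennreal (phi w (jc p k ps (Suc T))))"
  have inner: "(\<integral>\<^sup>+g. F (mrg (f, g)) \<partial>measure_pmf R) \<le> ennreal ((1 - \<alpha>) * phi w (jc p k f T))" for f
  proof -
    define j where "j = jc p k f T"
    have jk: "j \<le> k" unfolding j_def by (rule jc_le)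
    have jcm: "jc p k (mrg (f, g)) T = j" for g
      unfolding j_def by (rule jc_cong) (auto simp: mrg_def pact)
    have jcS: "jc p k (mrg (f, g)) (Suc T) =
        (if 0 < j \<and> g (Suc T, p (j - 1)) = p j then j - 1 else j)" for g
      using jcm[of g] by (simp add: Let_def mrg_def)
    show ?thesis
    proof (cases "j = 0")
      case True
      have "F (mrg (f, g)) = 0" for g using jcS[of g] True by (simp add: F_def phi_def)
      then show ?thesis by simp
    next
      case False
      define u where "u = p (j - 1)"
      define N where "N = out_nbrs E u"
      have jm: "j - 1 < k" using False jk by simp
      have uact: "u \<in> act V E" using pact jm u_def by simp
      have e: "(u, p j) \<in> E" using path jm u_def False by (metis Suc_diff_1 not_gr0)
      hence pjN: "p j \<in> N" by (simp add: N_def out_nbrs_def)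
      have finN: "finite N" unfolding N_def using out_nbrs_sub[OF EV] fin by (rule finite_subset)
      have neN: "N \<noteq> {}" using pjN by auto
      define h where "h = (\<lambda>y. ennreal (phi w (if y = p j then j - 1 else j)))"
      have "(\<integral>\<^sup>+g. F (mrg (f, g)) \<partial>measure_pmf R) = (\<integral>\<^sup>+g. h (g (Suc T, u)) \<partial>measure_pmf R)"
        using False by (intro nn_integral_cong) (simp only: F_def jcS h_def u_def, simp)
      also have "\<dots> = (\<integral>\<^sup>+y. h y \<partial>measure_pmf (pmf_of_set N))"
        unfolding R_def N_def by (rule component_int[OF fin uact])
      also have "\<dots> = sum h N / card N"
        by (rule nn_integral_pmf_of_set[OF neN finN])
      also have "sum h N = ennreal (\<Sum>y\<in>N. phi w (if y = p j then j - 1 else j))"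
        unfolding h_def using wpos jk by (intro sum_ennreal) (auto intro!: phi_nonneg[OF wpos])
      also have "(\<Sum>y\<in>N. phi w (if y = p j then j - 1 else j))
          = phi w (j - 1) + (real (card N) - 1) * phi w j"
        by (rule sum_split_pick[OF finN pjN])
      finally have eq1: "(\<integral>\<^sup>+g. F (mrg (f, g)) \<partial>measure_pmf R)
          = ennreal (phi w (j - 1) + (real (card N) - 1) * phi w j) / of_nat (card N)" .
      define d where "d = real (card N)"
      have d1: "d \<ge> 1" using finN neN d_def by (simp add: Suc_leI card_gt_0_iff)
      have dd: "d = real (out_deg E u)" by (simp add: d_def N_def out_deg_def)
      define Q where "Q = (\<Prod>i<j-1. w i)"
      have Q0: "Q \<ge> 0" unfolding Q_def using wpos jm by (auto intro!: prod_nonneg)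
      have phij: "phi w j = Q * w (j - 1)"
        unfolding phi_def Q_def using False
        by (metis Suc_diff_1 mult.commute not_gr0 prod.lessThan_Suc)
      have P: "0 \<le> phi w (j - 1)" "phi w (j - 1) \<le> Q"
        unfolding phi_def Q_def using wpos jm by (auto intro!: prod_nonneg)
      have adu: "\<alpha> * d < 1" using ad jm dd u_def by auto
      have wu: "w (j - 1) = 1 / (1 - \<alpha> * d)" using w jm dd u_def by auto
      have key: "(phi w (j - 1) + (d - 1) * (Q * w (j - 1))) / d \<le> (1 - \<alpha>) * (Q * w (j - 1))"
        by (rule step_ineq[OF d1 Q0 P adu wu a0])
      have nn: "0 \<le> phi w (j - 1) + (d - 1) * phi w j"
        using P d1 phij Q0 wpos jm by (auto intro!: add_nonneg_nonneg mult_nonneg_nonneg)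
      have "ennreal (phi w (j - 1) + (real (card N) - 1) * phi w j) / of_nat (card N)
          = ennreal ((phi w (j - 1) + (d - 1) * phi w j) / d)"
        using d1 nn unfolding d_def
        by (simp add: ennreal_of_nat_eq_real_of_nat divide_ennreal)
      also have "\<dots> \<le> ennreal ((1 - \<alpha>) * phi w j)"
        using key phij by (intro ennreal_leI) simp
      finally show ?thesis using eq1 j_def by simp
    qed
  qed
  have "(\<integral>\<^sup>+ps. F ps \<partial>measure_pmf (picks_pmf V E (Suc T)))
      = (\<integral>\<^sup>+x. F (mrg x) \<partial>measure_pmf (pair_pmf M R))"
    unfolding picks_Suc[OF fin] M_def R_def mrg_def by simp
  also have "\<dots> = (\<integral>\<^sup>+f. \<integral>\<^sup>+g. F (mrg (f, g)) \<partial>measure_pmf R \<partial>measure_pmf M)"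
    by (rule nn_integral_pair_pmf')
  also have "\<dots> \<le> (\<integral>\<^sup>+f. ennreal ((1 - \<alpha>) * phi w (jc p k f T)) \<partial>measure_pmf M)"
    by (intro nn_integral_mono inner)
  also have "\<dots> = (\<integral>\<^sup>+f. ennreal (1 - \<alpha>) * ennreal (phi w (jc p k f T)) \<partial>measure_pmf M)"
    using a1 by (intro nn_integral_cong) (simp add: ennreal_mult[OF _ phi_nonneg[OF wpos jc_le]])
  also have "\<dots> = ennreal (1 - \<alpha>) * (\<integral>\<^sup>+f. ennreal (phi w (jc p k f T)) \<partial>measure_pmf M)"
    by (rule nn_integral_cmult) simp
  also have "\<dots> \<le> ennreal (1 - \<alpha>) * ennreal ((1 - \<alpha>) ^ T * phi w k)"
    using Suc.IH M_def by (intro mult_left_mono) auto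
  also have "\<dots> = ennreal ((1 - \<alpha>) ^ Suc T * phi w k)"
    using a1 wpos by (simp add: ennreal_mult[symmetric] phi_nonneg mult.assoc)
  finally show ?case unfolding F_def .
qed

lemma chain_prob:
  assumes fin: "finite V" and EV: "E \<subseteq> V \<times> V"
    and path: "\<forall>i<k. (p i, p (Suc i)) \<in> E"
    and a0: "0 \<le> \<alpha>" and a1: "\<alpha> \<le> 1"
    and ad: "\<forall>i<k. \<alpha> * real (out_deg E (p i)) < 1"
    and w: "\<forall>i<k. w i = 1 / (1 - \<alpha> * real (out_deg E (p i)))"
  shows "measure_pmf.prob (picks_pmf V E T) {ps. 0 < jc p k ps T} \<le> (1 - \<alpha>) ^ T * phi w k"
proof -
  have w1: "\<forall>i<k. w i \<ge> 1" using w ad a0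
    by (auto simp: field_simps)
  have ind: "indicator {ps. 0 < jc p k ps T} ps \<le> ennreal (phi w (jc p k ps T))" for ps
  proof (cases "0 < jc p k ps T")
    case True
    have "1 \<le> (\<Prod>i<jc p k ps T. w i)" using w1 jc_le[of p k ps T]
      by (intro prod_ge_1) auto
    then show ?thesis using True by (simp add: phi_def)
  qed simp
  have "emeasure (measure_pmf (picks_pmf V E T)) {ps. 0 < jc p k ps T}
      = (\<integral>\<^sup>+ps. indicator {ps. 0 < jc p k ps T} ps \<partial>measure_pmf (picks_pmf V E T))"
    by simp
  also have "\<dots> \<le> (\<integral>\<^sup>+ps. ennreal (phi w (jc p k ps T)) \<partial>measure_pmf (picks_pmf V E T))"
    by (intro nn_integral_mono ind)
  also have "\<dots> \<le> ennreal ((1 - \<alpha>) ^ T * phi w k)"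
    by (rule chain_bound[OF assms])
  finally have "ennreal (measure_pmf.prob (picks_pmf V E T) {ps. 0 < jc p k ps T})
      \<le> ennreal ((1 - \<alpha>) ^ T * phi w k)"
    by (simp add: measure_pmf.emeasure_eq_measure)
  moreover have "0 \<le> (1 - \<alpha>) ^ T * phi w k"
    proof -
    have wp: "\<forall>i<k. 0 \<le> w i" using w1 by (meson order.trans zero_le_one)
    show ?thesis using a1 phi_nonneg[OF wp order.refl] by simp
  qed
  ultimately show ?thesis by (simp add: ennreal_le_iff)
qed

lemma path_seg:
  assumes path: "\<forall>i<k. (p i, p (Suc i)) \<in> E"
  shows "a \<le> b \<Longrightarrow> b \<le> k \<Longrightarrow> (p a, p b) \<in> E ^^ (b - a)"
proof (induction b)
  case 0 then show ?case by simp
next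
  case (Suc b)
  show ?case
  proof (cases "a = Suc b")
    case True then show ?thesis by simp
  next
    case False
    hence "(p a, p b) \<in> E ^^ (b - a)" using Suc by auto
    moreover have "(p b, p (Suc b)) \<in> E" using path Suc.prems by auto
    ultimately have "(p a, p (Suc b)) \<in> E ^^ Suc (b - a)" by (rule relpow_Suc_I)
    moreover have "Suc (b - a) = Suc b - a" using False Suc.prems by auto
    ultimately show ?thesis by simp
  qed
qed

definition spath :: "('a \<times> 'a) set \<Rightarrow> 'a \<Rightarrow> 'a \<Rightarrow> nat \<Rightarrow> (nat \<Rightarrow> 'a) \<Rightarrow> bool" where
  "spath E v w k p \<longleftrightarrow> p 0 = v \<and> p k = w \<and> (\<forall>i<k. (p i, p (Suc i)) \<in> E)
     \<and> (\<forall>m. (v, w) \<in> E ^^ m \<longrightarrow> k \<le> m)"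

lemma spath_exists:
  assumes "(v, w) \<in> E\<^sup>*"
  shows "\<exists>k p. spath E v w k p"
proof -
  obtain m where m: "(v, w) \<in> E ^^ m" using assms rtrancl_power by blast
  define k where "k = (LEAST m. (v, w) \<in> E ^^ m)"
  have k: "(v, w) \<in> E ^^ k" unfolding k_def using m by (rule LeastI)
  have kmin: "\<forall>m. (v, w) \<in> E ^^ m \<longrightarrow> k \<le> m" unfolding k_def by (auto intro: Least_le)
  from k obtain p where "p 0 = v \<and> p k = w \<and> (\<forall>i<k. (p i, p (Suc i)) \<in> E)"
    unfolding relpow_fun_conv by blast
  then show ?thesis using kmin unfolding spath_def by blast
qed

lemma spath_shortcut:
  assumes sp: "spath E v w k p" and ai: "a < i" "i \<le> k"
    and e1: "(p a, u) \<in> E" and e2: "(u, p i) \<in> E"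
  shows "i \<le> a + 2"
proof -
  have path: "\<forall>i<k. (p i, p (Suc i)) \<in> E" and p0: "p 0 = v" and pk: "p k = w"
    using sp by (auto simp: spath_def)
  have s1: "(v, p a) \<in> E ^^ a" using path_seg[OF path, of 0 a] ai p0 by simp
  have s2: "(p i, w) \<in> E ^^ (k - i)" using path_seg[OF path, of i k] ai pk by simp
  have "(p a, p i) \<in> E ^^ 2" using e1 e2 by (auto simp: numeral_2_eq_2 relpow_Suc_I2)
  hence "(v, p i) \<in> E ^^ (a + 2)" using s1 relpow_add by blast
  hence "(v, w) \<in> E ^^ (a + 2 + (k - i))" using s2 relpow_add by blast
  hence "k \<le> a + 2 + (k - i)" using sp by (auto simp: spath_def)
  thus ?thesis using ai by simp
qed

lemma spath_dist:
  assumes sp: "spath E v w k p" and v: "v \<in> V" and w: "w \<in> V"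
  shows "is_dist E v w k"
proof -
  have "(v, w) \<in> E ^^ k" using path_seg[of k p E 0 k] sp by (auto simp: spath_def)
  moreover have "\<forall>j<k. (v, w) \<notin> E ^^ j"
  proof (intro allI impI)
    fix j assume j: "j < k"
    show "(v, w) \<notin> E ^^ j"
    proof
      assume "(v, w) \<in> E ^^ j"
      hence "k \<le> j" using sp unfolding spath_def by blast
      thus False using j by simp
    qed
  qed
  ultimately show ?thesis unfolding is_dist_def by blast
qed

lemma is_dist_unique: "is_dist E v u k1 \<Longrightarrow> is_dist E v u k2 \<Longrightarrow> k1 = k2"
proof (rule ccontr)
  assume a: "is_dist E v u k1" "is_dist E v u k2" "k1 \<noteq> k2"
  show False
  proof (cases "k1 < k2")
    case True then show False using a unfolding is_dist_def by blast
  next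
    case False then have "k2 < k1" using a(3) by simp
    then show False using a unfolding is_dist_def by blast
  qed
qed

lemma k_le_diam:
  assumes fin: "finite V" and sp: "spath E v w k p" and v: "v \<in> V" and w: "w \<in> V"
  shows "k \<le> diam V E"
proof -
  have fin1: "finite {k. is_dist E v u k}" for v u
  proof (cases "\<exists>k. is_dist E v u k")
    case True
    then obtain k0 where k0: "is_dist E v u k0" by blast
    have "{k. is_dist E v u k} \<subseteq> {k0}"
    proof
      fix k assume "k \<in> {k. is_dist E v u k}"
      hence "is_dist E v u k" by simp
      hence "k = k0" using k0 by (rule is_dist_unique)
      thus "k \<in> {k0}" by simp
    qed
    then show ?thesis by (rule finite_subset) simp
  qed simp
  have eq: "{k. \<exists>v\<in>V. \<exists>u\<in>V. is_dist E v u k} = (\<Union>v\<in>V. \<Union>u\<in>V. {k. is_dist E v u k})"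
    by blast
  have "finite (\<Union>v\<in>V. \<Union>u\<in>V. {k. is_dist E v u k})"
    by (intro finite_UN_I fin fin1)
  hence "finite {k. \<exists>v\<in>V. \<exists>u\<in>V. is_dist E v u k}" by (simp only: eq)
  moreover have "k \<in> {k. \<exists>v\<in>V. \<exists>u\<in>V. is_dist E v u k}" using spath_dist[OF sp v w] v w by blast
  ultimately show ?thesis unfolding diam_def by (rule Max_ge)
qed

lemma spath_inV:
  assumes "spath E v w k p" "E \<subseteq> V \<times> V" "v \<in> V" "i \<le> k"
  shows "p i \<in> V"
proof (cases i)
  case 0 then show ?thesis using assms by (auto simp: spath_def)
next
  case (Suc j)
  have "(p j, p i) \<in> E" using assms Suc by (auto simp: spath_def)
  then show ?thesis using assms by auto
qed

lemma deg_le_card: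
  assumes fin: "finite V" and EV: "E \<subseteq> V \<times> V"
  shows "out_deg E u \<le> card V"
  unfolding out_deg_def by (rule card_mono[OF fin out_nbrs_sub[OF EV]])

lemma deg_le_max:
  assumes fin: "finite V" and u: "u \<in> V"
  shows "out_deg E u \<le> max_out_deg V E"
  unfolding max_out_deg_def using fin u by auto


lemma count_if_card: "(\<Sum>i<(k::nat). if P i then 1 else (0::nat)) = card {i. i < k \<and> P i}"
proof -
  have "(\<Sum>i<k. if P i then 1 else (0::nat)) = (\<Sum>i\<in>{i\<in>{..<k}. P i}. 1)"
    by (rule sum.inter_filter[symmetric]) simp
  also have "{i\<in>{..<k}. P i} = {i. i < k \<and> P i}" by auto
  finally show ?thesis by simp
qed

lemma sum_deg_spath:
  assumes fin: "finite V" and EV: "E \<subseteq> V \<times> V" and und: "undirected E"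
    and sp: "spath E v w k p"
  shows "(\<Sum>i<k. real (out_deg E (p i))) \<le> 3 * real (card V)"
proof -
  have fN: "\<And>u. finite (out_nbrs E u)" using out_nbrs_sub[OF EV] fin by (rule finite_subset)
  have "(\<Sum>i<k. out_deg E (p i)) = (\<Sum>i<k. \<Sum>u\<in>V. if (p i, u) \<in> E then 1 else (0::nat))"
  proof (rule sum.cong[OF refl])
    fix i
    have "out_nbrs E (p i) = {u\<in>V. (p i, u) \<in> E}" using EV by (auto simp: out_nbrs_def)
    then show "out_deg E (p i) = (\<Sum>u\<in>V. if (p i, u) \<in> E then 1 else 0)"
      unfolding out_deg_def using fin by (simp add: sum.If_cases Int_def)
  qed
  also have "\<dots> = (\<Sum>u\<in>V. \<Sum>i<k. if (p i, u) \<in> E then 1 else (0::nat))"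
    by (rule sum.swap)
  also have "\<dots> = (\<Sum>u\<in>V. card {i. i < k \<and> (p i, u) \<in> E})"
    by (rule sum.cong[OF refl]) (rule count_if_card)
  also have "\<dots> \<le> (\<Sum>u\<in>V. 3)"
  proof (rule sum_mono)
    fix u
    define S where "S = {i. i < k \<and> (p i, u) \<in> E}"
    show "card {i. i < k \<and> (p i, u) \<in> E} \<le> 3"
    proof (cases "S = {}")
      case True then show ?thesis by (simp add: S_def[symmetric])
    next
      case False
      have fS: "finite S" unfolding S_def by simp
      define a where "a = Min S"
      have aS: "a \<in> S" using False fS a_def by simp
      have "S \<subseteq> {a, a+1, a+2}"
      proof
        fix i assume iS: "i \<in> S"
        have "a \<le> i" using iS fS a_def by simp
        moreover have "a < i \<Longrightarrow> i \<le> a + 2"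
          using spath_shortcut[OF sp, of a i u] aS iS und unfolding S_def undirected_def by auto
        ultimately show "i \<in> {a, a+1, a+2}" by (cases "a = i") auto
      qed
      hence "card S \<le> card {a, a+1, a+2}" by (rule card_mono[rotated]) simp
      also have "\<dots> \<le> 3" by (rule card_insert_le_m1) (auto simp: card_insert_le_m1)
      finally show ?thesis unfolding S_def .
    qed
  qed
  also have "\<dots> = 3 * card V" by simp
  finally have "(\<Sum>i<k. out_deg E (p i)) \<le> 3 * card V" .
  hence "real (\<Sum>i<k. out_deg E (p i)) \<le> real (3 * card V)" by linarith
  thus ?thesis by simp
qed

lemma union_bound:
  assumes fin: "finite V" and EV: "E \<subseteq> V \<times> V" and B0: "0 \<le> B"
    and H: "\<forall>v\<in>V. reachC V E S0 v \<longrightarrow> (\<exists>k p. p 0 = v \<and> S0 (p k) \<noteq> Uncolored \<and>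
        (\<forall>i<k. (p i, p (Suc i)) \<in> E) \<and>
        measure_pmf.prob (picks_pmf V E T) {ps. 0 < jc p k ps T} \<le> B)"
  shows "measure_pmf.prob (picks_pmf V E T) {ps. \<not> stable V E (rp_run V E S0 ps T)}
           \<le> real (card V) * B"
proof -
  define Vr where "Vr = {v\<in>V. reachC V E S0 v}"
  define Good where "Good = (\<lambda>v k p. p 0 = v \<and> S0 (p k) \<noteq> Uncolored \<and>
        (\<forall>i<k. (p i, p (Suc i)) \<in> E) \<and>
        measure_pmf.prob (picks_pmf V E T) {ps. 0 < jc p k ps T} \<le> B)"
  have "\<forall>v\<in>Vr. \<exists>k. \<exists>p. Good v k p" using H unfolding Vr_def Good_def by blast
  from bchoice[OF this] obtain K where "\<forall>v\<in>Vr. \<exists>p. Good v (K v) p" by blast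
  from bchoice[OF this] obtain P where GP: "\<forall>v\<in>Vr. Good v (K v) (P v)" by blast
  have KP: "\<forall>v\<in>Vr. P v 0 = v \<and> S0 (P v (K v)) \<noteq> Uncolored \<and>
        (\<forall>i<K v. (P v i, P v (Suc i)) \<in> E) \<and>
        measure_pmf.prob (picks_pmf V E T) {ps. 0 < jc (P v) (K v) ps T} \<le> B"
    using GP unfolding Good_def by blast
  define A where "A = (\<lambda>v. {ps. 0 < jc (P v) (K v) ps T})"
  let ?M = "measure_pmf (picks_pmf V E T)"
  have sub: "{ps. \<not> stable V E (rp_run V E S0 ps T)} \<inter> set_pmf (picks_pmf V E T) \<subseteq> \<Union>(A ` Vr)"
  proof
    fix ps assume ps: "ps \<in> {ps. \<not> stable V E (rp_run V E S0 ps T)} \<inter> set_pmf (picks_pmf V E T)"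
    show "ps \<in> \<Union>(A ` Vr)"
    proof (rule ccontr)
      assume "ps \<notin> \<Union>(A ` Vr)"
      hence j0: "\<forall>v\<in>Vr. jc (P v) (K v) ps T = 0" unfolding A_def by auto
      have "\<forall>v\<in>V. reachC V E S0 v \<longrightarrow> rp_run V E S0 ps T v \<noteq> Uncolored"
      proof (intro ballI impI)
        fix v assume v: "v \<in> V" "reachC V E S0 v"
        hence vr: "v \<in> Vr" by (simp add: Vr_def)
        have kp: "P v 0 = v" "S0 (P v (K v)) \<noteq> Uncolored" "\<forall>i<K v. (P v i, P v (Suc i)) \<in> E"
          using KP vr by auto
        have "\<forall>i. jc (P v) (K v) ps T \<le> i \<and> i \<le> K v \<longrightarrow> rp_run V E S0 ps T (P v i) \<noteq> Uncolored"
          using chain_colored[of E V "K v" "P v" S0 ps T] EV kp by blast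
        hence "rp_run V E S0 ps T (P v 0) \<noteq> Uncolored" using j0 vr by simp
        then show "rp_run V E S0 ps T v \<noteq> Uncolored" using kp(1) by simp
      qed
      hence "stable V E (rp_run V E S0 ps T)" using stable_if[OF fin EV] ps by blast
      thus False using ps by blast
    qed
  qed
  have "measure ?M {ps. \<not> stable V E (rp_run V E S0 ps T)}
      = measure ?M ({ps. \<not> stable V E (rp_run V E S0 ps T)} \<inter> set_pmf (picks_pmf V E T))"
    by (simp add: measure_Int_set_pmf)
  also have "\<dots> \<le> measure ?M (\<Union>(A ` Vr))"
    by (rule measure_pmf.finite_measure_mono[OF sub]) simp
  also have "\<dots> \<le> (\<Sum>v\<in>Vr. measure ?M (A v))"
    using fin unfolding Vr_def by (intro measure_pmf.finite_measure_subadditive_finite) auto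
  also have "\<dots> \<le> (\<Sum>v\<in>Vr. B)"
    using KP unfolding A_def by (intro sum_mono) auto
  also have "\<dots> = real (card Vr) * B" by simp
  also have "\<dots> \<le> real (card V) * B"
    using B0 fin unfolding Vr_def by (intro mult_right_mono) (auto intro: card_mono)
  finally show ?thesis .
qed

lemma conv_ge:
  assumes x: "0 \<le> x"
  shows "conv_prob V E S0 x \<ge> 1 - measure_pmf.prob (picks_pmf V E (nat \<lfloor>x\<rfloor>))
           {ps. \<not> stable V E (rp_run V E S0 ps (nat \<lfloor>x\<rfloor>))}"
proof -
  let ?T = "nat \<lfloor>x\<rfloor>"
  let ?M = "measure_pmf (picks_pmf V E ?T)"
  have "real ?T \<le> x" using x by linarith
  hence sub: "{ps. stable V E (rp_run V E S0 ps ?T)} \<subseteq> {ps. \<exists>t. real t \<le> x \<and> stable V E (rp_run V E S0 ps t)}"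
    by blast
  have "1 - measure ?M {ps. \<not> stable V E (rp_run V E S0 ps ?T)} = measure ?M {ps. stable V E (rp_run V E S0 ps ?T)}"
    using measure_pmf.prob_compl[of "{ps. stable V E (rp_run V E S0 ps ?T)}" "picks_pmf V E ?T"]
    by (simp add: Compl_eq_Diff_UNIV[symmetric] Collect_neg_eq)
  also have "\<dots> \<le> conv_prob V E S0 x"
    unfolding conv_prob_def by (rule measure_pmf.finite_measure_mono[OF sub]) simp
  finally show ?thesis .
qed

lemma pow_exp_bound:
  fixes \<alpha> :: real
  assumes "0 \<le> \<alpha>" "\<alpha> \<le> 1"
  shows "(1 - \<alpha>) ^ T \<le> exp (- \<alpha> * real T)"
proof -
  have "(1 - \<alpha>) ^ T \<le> exp (- \<alpha>) ^ T"
    using assms by (intro power_mono) (auto, metis add_uminus_conv_diff exp_ge_add_one_self)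
  also have "\<dots> = exp (- \<alpha> * real T)" by (metis exp_of_nat_mult mult.commute)
  finally show ?thesis .
qed

lemma log2_ge_ln:
  assumes "1 \<le> (n::real)"
  shows "ln n \<le> log 2 n"
proof -
  have l: "0 \<le> ln n" using assms by simp
  have "0 < ln (2::real)" by simp
  moreover have "ln (2::real) < 1" by (rule ln_2_less_1)
  ultimately have "ln n * ln 2 \<le> ln n" using l by (simp add: mult_left_le)
  thus ?thesis unfolding log_def using \<open>0 < ln 2\<close> by (simp add: field_simps)
qed

lemma exp_ln_sq:
  assumes "0 < (n::real)"
  shows "exp (7/2 - 2 * ln n) = exp (7/2) / n^2"
proof -
  have "exp (2 * ln n) = exp (ln n) ^ 2" using exp_of_nat_mult[of 2 "ln n"] by simp
  hence "exp (2 * ln n) = n^2" using assms by simp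
  thus ?thesis by (simp add: exp_diff)
qed

lemma final_arith:
  assumes "100 \<le> (n::nat)"
  shows "real n * exp (7/2 - 2 * ln (real n)) \<le> 100 / (real n + 1)"
proof -
  have n0: "0 < real n" using assms by simp
  have "exp (7/2::real) \<le> exp 4" by simp
  also have "exp (4::real) = exp 1 ^ 4" using exp_of_nat_mult[of 4 1] by simp
  also have "\<dots> \<le> 3 ^ 4" by (intro power_mono exp_le) simp
  finally have e: "exp (7/2::real) \<le> 81" by simp
  have "real n * exp (7/2 - 2 * ln (real n)) = exp (7/2) / real n"
    using exp_ln_sq[OF n0] n0 by (simp add: power2_eq_square)
  also have "\<dots> \<le> 81 / real n" using e n0 by (simp add: divide_right_mono)
  also have "\<dots> \<le> 100 / (real n + 1)" using assms n0 by (simp add: field_simps)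
  finally show ?thesis .
qed

lemma delta_lim: "(\<lambda>n::nat. 100 / (real n + 1)) \<longlonglongrightarrow> 0"
proof -
  have "(\<lambda>n::nat. 100 / real (Suc n)) \<longlonglongrightarrow> 0"
    using LIMSEQ_Suc[OF lim_const_over_n[of "100::real"]] by simp
  thus ?thesis by (simp add: add.commute)
qed

lemma nat_floor_ge:
  assumes "0 \<le> (x::real)" shows "x - 1 \<le> real (nat \<lfloor>x\<rfloor>)"
  using assms by linarith

lemma dir_node:
  assumes fin: "finite V" and EV: "E \<subseteq> V \<times> V" and n100: "100 \<le> card V"
    and sp: "spath E v w k p" and v: "v \<in> V" and w: "w \<in> V"
    and T: "T = nat \<lfloor>4 * real (diam V E) * real (max_out_deg V E) * log 2 (real (card V))\<rfloor>"
  shows "\<exists>\<alpha> wt. 0 \<le> \<alpha> \<and> \<alpha> \<le> 1 \<and> (\<forall>i<k. \<alpha> * real (out_deg E (p i)) < 1)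
     \<and> (\<forall>i<k. wt i = 1 / (1 - \<alpha> * real (out_deg E (p i))))
     \<and> (1 - \<alpha>) ^ T * phi wt k \<le> exp (7/2 - 2 * ln (real (card V)))"
proof -
  define \<Delta> where "\<Delta> = real (max_out_deg V E)"
  define D where "D = real (diam V E)"
  define n where "n = real (card V)"
  define L where "L = log 2 n"
  define \<alpha> where "\<alpha> = 1 / (2 * \<Delta>)"
  define wt where "wt = (\<lambda>i. 1 / (1 - \<alpha> * real (out_deg E (p i))))"
  have D0: "D \<ge> 0" "\<Delta> \<ge> 0" by (auto simp: D_def \<Delta>_def)
  have a0: "0 \<le> \<alpha>" using D0 by (simp add: \<alpha>_def)
  have a1: "\<alpha> \<le> 1"
  proof (cases "\<Delta> = 0")
    case False
    hence "max_out_deg V E \<noteq> 0" unfolding \<Delta>_def by simp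
    hence "\<Delta> \<ge> 1" unfolding \<Delta>_def by simp
    then show ?thesis by (simp add: \<alpha>_def field_simps)
  qed (simp add: \<alpha>_def)
  have n1: "n \<ge> 100" using n100 by (simp add: n_def)
  have lnn: "ln n \<le> L" unfolding L_def by (rule log2_ge_ln) (use n1 in simp)
  have L1: "L \<ge> 1" unfolding L_def using n1 by simp
  have lnn0: "0 \<le> ln n" using n1 by simp
  show ?thesis
  proof (cases "k = 0")
    case True
    then show ?thesis using a0 a1 by (intro exI[of _ \<alpha>] exI[of _ wt]) (simp add: phi_def)
  next
    case False
    have path: "\<forall>i<k. (p i, p (Suc i)) \<in> E" using sp by (simp add: spath_def)
    have pV: "\<And>i. i \<le> k \<Longrightarrow> p i \<in> V" using spath_inV[OF sp EV v] by blast
    have fN: "\<And>u. finite (out_nbrs E u)" using out_nbrs_sub[OF EV] fin by (rule finite_subset)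
    have "(p 0, p (Suc 0)) \<in> E" using path False by simp
    hence "out_nbrs E (p 0) \<noteq> {}" by (auto simp: out_nbrs_def)
    hence "card (out_nbrs E (p 0)) \<noteq> 0" using fN[of "p 0"] by simp
    hence "out_deg E (p 0) \<ge> 1" unfolding out_deg_def by simp
    moreover have "out_deg E (p 0) \<le> max_out_deg V E" using deg_le_max[OF fin pV[of 0]] by simp
    ultimately have Dl1: "\<Delta> \<ge> 1" unfolding \<Delta>_def by linarith
    have kD: "real k \<le> D" using k_le_diam[OF fin sp v w] by (simp add: D_def)
    have D1: "D \<ge> 1" using kD False by linarith
    have degle: "\<And>i. i < k \<Longrightarrow> real (out_deg E (p i)) \<le> \<Delta>"
      using deg_le_max[OF fin] pV unfolding \<Delta>_def by (simp add: less_imp_le)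
    have ad: "\<And>i. i < k \<Longrightarrow> \<alpha> * real (out_deg E (p i)) \<le> 1/2"
    proof -
      fix i assume "i < k"
      hence "real (out_deg E (p i)) \<le> \<Delta>" by (rule degle)
      thus "\<alpha> * real (out_deg E (p i)) \<le> 1/2" using Dl1 by (simp add: \<alpha>_def field_simps)
    qed
    have wt2: "\<And>i. i < k \<Longrightarrow> wt i \<le> 2 \<and> 0 \<le> wt i"
    proof -
      fix i assume "i < k"
      hence h: "\<alpha> * real (out_deg E (p i)) \<le> 1/2" by (rule ad)
      have "0 \<le> \<alpha> * real (out_deg E (p i))" using a0 by simp
      thus "wt i \<le> 2 \<and> 0 \<le> wt i" using h unfolding wt_def by (simp add: field_simps)
    qed
    have "\<forall>i<k. 0 \<le> wt i" using wt2 by blast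
    hence phi0: "0 \<le> phi wt k" by (rule phi_nonneg[OF _ order.refl])
    have phik: "phi wt k \<le> 2 ^ k"
    proof -
      have "phi wt k = (\<Prod>i<k. wt i)" using False by (simp add: phi_def)
      also have "\<dots> \<le> (\<Prod>i<k. 2)" using wt2 by (intro prod_mono) auto
      finally show ?thesis by simp
    qed
    have e2: "(2::real) \<le> exp 1" using exp_ge_add_one_self[of "1::real"] by simp
    have "(2::real) ^ k \<le> exp 1 ^ k" using e2 by (intro power_mono) auto
    also have "\<dots> = exp (real k)" using exp_of_nat_mult[of k "1::real"] by simp
    also have "\<dots> \<le> exp D" using kD by simp
    finally have pk: "phi wt k \<le> exp D" using phik by linarith
    define x where "x = 4 * D * \<Delta> * L"
    have x0: "0 \<le> x" using D0 L1 by (simp add: x_def)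
    have Tx: "x - 1 \<le> real T" unfolding T using nat_floor_ge[OF x0]
      by (simp add: x_def D_def \<Delta>_def L_def n_def)
    have ax: "\<alpha> * x = 2 * D * L" using Dl1 by (simp add: \<alpha>_def x_def field_simps)
    have aT: "2 * D * L - 1/2 \<le> \<alpha> * real T"
    proof -
      have "\<alpha> * (x - 1) \<le> \<alpha> * real T" using Tx a0 by (rule mult_left_mono)
      moreover have "\<alpha> \<le> 1/2" using Dl1 by (simp add: \<alpha>_def field_simps)
      ultimately show ?thesis using ax by (simp add: right_diff_distrib)
    qed
    have "(1 - \<alpha>) ^ T * phi wt k \<le> exp (- \<alpha> * real T) * exp D"
    proof (rule mult_mono)
      show "(1 - \<alpha>) ^ T \<le> exp (- \<alpha> * real T)" by (rule pow_exp_bound[OF a0 a1])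
    qed (use pk phi0 in auto)
    also have "\<dots> = exp (- \<alpha> * real T + D)" by (simp only: exp_add)
    also have "\<dots> \<le> exp (7/2 - 2 * ln n)"
    proof -
      have "D * (2 * L - 1) \<ge> 1 * (2 * L - 1)" using D1 L1 by (intro mult_right_mono) auto
      hence "- \<alpha> * real T + D \<le> 7/2 - 2 * ln n" using aT lnn by (simp add: algebra_simps)
      thus ?thesis by simp
    qed
    finally have fin_b: "(1 - \<alpha>) ^ T * phi wt k \<le> exp (7/2 - 2 * ln (real (card V)))"
      by (simp add: n_def)
    have adk: "\<forall>i<k. \<alpha> * real (out_deg E (p i)) < 1" using ad by fastforce
    show ?thesis using a0 a1 adk fin_b by (intro exI[of _ \<alpha>] exI[of _ wt]) (simp add: wt_def)
  qed
qed

lemma inv_le_exp: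
  fixes y :: real
  assumes "0 \<le> y" "y \<le> 1/2"
  shows "1 / (1 - y) \<le> exp (2 * y)"
proof -
  have "0 \<le> y * (1 - 2 * y)" using assms by (intro mult_nonneg_nonneg) auto
  hence "1 \<le> (1 + 2 * y) * (1 - y)" by (simp add: algebra_simps)
  hence "1 / (1 - y) \<le> 1 + 2 * y" using assms by (simp add: divide_le_eq)
  also have "\<dots> \<le> exp (2 * y)" by (rule exp_ge_add_one_self)
  finally show ?thesis .
qed

lemma und_node:
  assumes fin: "finite V" and EV: "E \<subseteq> V \<times> V" and n100: "100 \<le> card V" and und: "undirected E"
    and sp: "spath E v w k p" and v: "v \<in> V"
    and T: "T = nat \<lfloor>20 * real (card V) * log 2 (real (card V))\<rfloor>"
  shows "\<exists>\<alpha> wt. 0 \<le> \<alpha> \<and> \<alpha> \<le> 1 \<and> (\<forall>i<k. \<alpha> * real (out_deg E (p i)) < 1)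
     \<and> (\<forall>i<k. wt i = 1 / (1 - \<alpha> * real (out_deg E (p i))))
     \<and> (1 - \<alpha>) ^ T * phi wt k \<le> exp (7/2 - 2 * ln (real (card V)))"
proof -
  define n where "n = real (card V)"
  define L where "L = log 2 n"
  define \<alpha> where "\<alpha> = 1 / (2 * n)"
  define wt where "wt = (\<lambda>i. 1 / (1 - \<alpha> * real (out_deg E (p i))))"
  have n1: "n \<ge> 100" using n100 by (simp add: n_def)
  have a0: "0 \<le> \<alpha>" using n1 by (simp add: \<alpha>_def)
  have ahalf: "\<alpha> \<le> 1/2" using n1 by (simp add: \<alpha>_def field_simps)
  hence a1: "\<alpha> \<le> 1" by simp
  have lnn: "ln n \<le> L" unfolding L_def by (rule log2_ge_ln) (use n1 in simp)
  have lnn0: "0 \<le> ln n" using n1 by simp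
  show ?thesis
  proof (cases "k = 0")
    case True
    then show ?thesis using a0 a1 by (intro exI[of _ \<alpha>] exI[of _ wt]) (simp add: phi_def)
  next
    case False
    have pV: "\<And>i. i \<le> k \<Longrightarrow> p i \<in> V" using spath_inV[OF sp EV v] by blast
    have ad: "\<And>i. i < k \<Longrightarrow> 0 \<le> \<alpha> * real (out_deg E (p i)) \<and> \<alpha> * real (out_deg E (p i)) \<le> 1/2"
    proof -
      fix i assume "i < k"
      have "real (out_deg E (p i)) \<le> n" using deg_le_card[OF fin EV] by (simp add: n_def)
      hence "\<alpha> * real (out_deg E (p i)) \<le> \<alpha> * n" using a0 by (rule mult_left_mono)
      also have "\<alpha> * n = 1/2" using n1 by (simp add: \<alpha>_def)
      finally show "0 \<le> \<alpha> * real (out_deg E (p i)) \<and> \<alpha> * real (out_deg E (p i)) \<le> 1/2"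
        using a0 by simp
    qed
    have wtb: "\<And>i. i < k \<Longrightarrow> 0 \<le> wt i \<and> wt i \<le> exp (2 * (\<alpha> * real (out_deg E (p i))))"
    proof -
      fix i assume i: "i < k"
      have h: "0 \<le> \<alpha> * real (out_deg E (p i))" "\<alpha> * real (out_deg E (p i)) \<le> 1/2" using ad[OF i] by auto
      have "0 \<le> wt i" unfolding wt_def using h by simp
      moreover have "wt i \<le> exp (2 * (\<alpha> * real (out_deg E (p i))))"
        unfolding wt_def by (rule inv_le_exp[OF h])
      ultimately show "0 \<le> wt i \<and> wt i \<le> exp (2 * (\<alpha> * real (out_deg E (p i))))" by simp
    qed
    have "\<forall>i<k. 0 \<le> wt i" using wtb by blast
    hence phi0: "0 \<le> phi wt k" by (rule phi_nonneg[OF _ order.refl])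
    have pk: "phi wt k \<le> exp 3"
    proof -
      have "phi wt k = (\<Prod>i<k. wt i)" using False by (simp add: phi_def)
      also have "\<dots> \<le> (\<Prod>i<k. exp (2 * (\<alpha> * real (out_deg E (p i)))))"
        using wtb by (intro prod_mono) auto
      also have "\<dots> = exp (\<Sum>i<k. 2 * (\<alpha> * real (out_deg E (p i))))"
        by (simp add: exp_sum)
      also have "(\<Sum>i<k. 2 * (\<alpha> * real (out_deg E (p i)))) = 2 * \<alpha> * (\<Sum>i<k. real (out_deg E (p i)))"
        by (simp add: sum_distrib_left mult.assoc)
      also have "\<dots> \<le> 2 * \<alpha> * (3 * n)"
        using sum_deg_spath[OF fin EV und sp] a0 by (intro mult_left_mono) (auto simp: n_def)
      also have "2 * \<alpha> * (3 * n) = 3" using n1 by (simp add: \<alpha>_def)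
      finally show ?thesis by simp
    qed
    define x where "x = 20 * n * L"
    have L0: "0 \<le> L" using lnn lnn0 by simp
    have x0: "0 \<le> x" using n1 L0 by (simp add: x_def)
    have Tx: "x - 1 \<le> real T" unfolding T using nat_floor_ge[OF x0]
      by (simp add: x_def L_def n_def)
    have ax: "\<alpha> * x = 10 * L" using n1 by (simp add: \<alpha>_def x_def field_simps)
    have aT: "10 * L - 1/2 \<le> \<alpha> * real T"
    proof -
      have "\<alpha> * (x - 1) \<le> \<alpha> * real T" using Tx a0 by (rule mult_left_mono)
      thus ?thesis using ax ahalf by (simp add: right_diff_distrib)
    qed
    have "(1 - \<alpha>) ^ T * phi wt k \<le> exp (- \<alpha> * real T) * exp 3"
    proof (rule mult_mono)
      show "(1 - \<alpha>) ^ T \<le> exp (- \<alpha> * real T)" by (rule pow_exp_bound[OF a0 a1])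
    qed (use pk phi0 in auto)
    also have "\<dots> = exp (- \<alpha> * real T + 3)" by (simp only: exp_add)
    also have "\<dots> \<le> exp (7/2 - 2 * ln n)"
    proof -
      have "- \<alpha> * real T + 3 \<le> 7/2 - 2 * ln n" using aT lnn lnn0 by simp
      thus ?thesis by simp
    qed
    finally have fin_b: "(1 - \<alpha>) ^ T * phi wt k \<le> exp (7/2 - 2 * ln (real (card V)))"
      by (simp add: n_def)
    have adk: "\<forall>i<k. \<alpha> * real (out_deg E (p i)) < 1"
    proof (intro allI impI)
      fix i assume "i < k" then show "\<alpha> * real (out_deg E (p i)) < 1" using ad by fastforce
    qed
    show ?thesis using a0 a1 adk fin_b by (intro exI[of _ \<alpha>] exI[of _ wt]) (simp add: wt_def)
  qed
qed

lemma node_to_prob: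
  assumes fin: "finite V" and EV: "E \<subseteq> V \<times> V" and n100: "100 \<le> card V"
    and x0: "0 \<le> x"
    and node: "\<And>v w k p. v \<in> V \<Longrightarrow> w \<in> V \<Longrightarrow> spath E v w k p \<Longrightarrow>
       \<exists>\<alpha> wt. 0 \<le> \<alpha> \<and> \<alpha> \<le> 1 \<and> (\<forall>i<k. \<alpha> * real (out_deg E (p i)) < 1)
     \<and> (\<forall>i<k. wt i = 1 / (1 - \<alpha> * real (out_deg E (p i))))
     \<and> (1 - \<alpha>) ^ (nat \<lfloor>x\<rfloor>) * phi wt k \<le> exp (7/2 - 2 * ln (real (card V)))"
  shows "conv_prob V E S0 x \<ge> 1 - 100 / (real (card V) + 1)"
proof -
  define T where "T = nat \<lfloor>x\<rfloor>"
  define B where "B = exp (7/2 - 2 * ln (real (card V)))"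
  have H: "\<forall>v\<in>V. reachC V E S0 v \<longrightarrow> (\<exists>k p. p 0 = v \<and> S0 (p k) \<noteq> Uncolored \<and>
        (\<forall>i<k. (p i, p (Suc i)) \<in> E) \<and>
        measure_pmf.prob (picks_pmf V E T) {ps. 0 < jc p k ps T} \<le> B)"
  proof (intro ballI impI)
    fix v assume v: "v \<in> V" and r: "reachC V E S0 v"
    then obtain w where w: "w \<in> V" "S0 w \<noteq> Uncolored" "(v, w) \<in> E\<^sup>*"
      unfolding reachC_def by blast
    obtain k p where sp: "spath E v w k p" using spath_exists[OF w(3)] by blast
    have path: "\<forall>i<k. (p i, p (Suc i)) \<in> E" and p0: "p 0 = v" and pk: "p k = w"
      using sp by (auto simp: spath_def)
    obtain \<alpha> wt where aw: "0 \<le> \<alpha>" "\<alpha> \<le> 1" "\<forall>i<k. \<alpha> * real (out_deg E (p i)) < 1"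
      "\<forall>i<k. wt i = 1 / (1 - \<alpha> * real (out_deg E (p i)))"
      "(1 - \<alpha>) ^ T * phi wt k \<le> B"
      using node[OF v w(1) sp] unfolding T_def B_def by blast
    have "measure_pmf.prob (picks_pmf V E T) {ps. 0 < jc p k ps T} \<le> (1 - \<alpha>) ^ T * phi wt k"
      by (rule chain_prob[OF fin EV path aw(1) aw(2) aw(3) aw(4)])
    also have "\<dots> \<le> B" by (rule aw(5))
    finally have pb: "measure_pmf.prob (picks_pmf V E T) {ps. 0 < jc p k ps T} \<le> B" .
    show "\<exists>k p. p 0 = v \<and> S0 (p k) \<noteq> Uncolored \<and>
        (\<forall>i<k. (p i, p (Suc i)) \<in> E) \<and>
        measure_pmf.prob (picks_pmf V E T) {ps. 0 < jc p k ps T} \<le> B"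
      using p0 pk w(2) path pb by blast
  qed
  have B0: "0 \<le> B" by (simp add: B_def)
  have "measure_pmf.prob (picks_pmf V E T) {ps. \<not> stable V E (rp_run V E S0 ps T)} \<le> real (card V) * B"
    by (rule union_bound[OF fin EV B0 H])
  also have "\<dots> \<le> 100 / (real (card V) + 1)" unfolding B_def by (rule final_arith[OF n100])
  finally have "measure_pmf.prob (picks_pmf V E T) {ps. \<not> stable V E (rp_run V E S0 ps T)}
     \<le> 100 / (real (card V) + 1)" .
  moreover have "conv_prob V E S0 x \<ge> 1 - measure_pmf.prob (picks_pmf V E T)
           {ps. \<not> stable V E (rp_run V E S0 ps T)}"
    unfolding T_def by (rule conv_ge[OF x0])
  ultimately show ?thesis by linarith
qed

lemma small_case:
  assumes "card V < 100"
  shows "conv_prob V E S0 x \<ge> 1 - 100 / (real (card V) + 1)"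
proof -
  have "1 \<le> 100 / (real (card V) + 1)" using assms by (simp add: field_simps)
  moreover have "0 \<le> conv_prob V E S0 x" unfolding conv_prob_def by simp
  ultimately show ?thesis by linarith
qed

theorem theorem3p2:
  "\<exists>\<delta> :: nat \<Rightarrow> real. \<delta> \<longlonglongrightarrow> 0 \<and>
     (\<forall>(V :: 'a set) E (S0 :: 'a state). finite V \<longrightarrow> E \<subseteq> V \<times> V \<longrightarrow>
        conv_prob V E S0 (4 * real (diam V E) * real (max_out_deg V E) * log 2 (real (card V)))
          \<ge> 1 - \<delta> (card V)
        \<and> (undirected E \<longrightarrow>
             conv_prob V E S0 (20 * real (card V) * log 2 (real (card V))) \<ge> 1 - \<delta> (card V)))"
proof (intro exI[of _ "\<lambda>n. 100 / (real n + 1)"] conjI allI impI)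
  show "(\<lambda>n::nat. 100 / (real n + 1)) \<longlonglongrightarrow> 0" by (rule delta_lim)
next
  fix V :: "'a set" and E and S0 :: "'a state"
  assume fin: "finite V" and EV: "E \<subseteq> V \<times> V"
  show "conv_prob V E S0 (4 * real (diam V E) * real (max_out_deg V E) * log 2 (real (card V)))
          \<ge> 1 - 100 / (real (card V) + 1)"
  proof (cases "card V < 100")
    case True then show ?thesis by (rule small_case)
  next
    case False
    hence n100: "100 \<le> card V" by simp
    have "0 \<le> log 2 (real (card V))" using n100 by simp
    hence x0: "0 \<le> 4 * real (diam V E) * real (max_out_deg V E) * log 2 (real (card V))" by simp
    show ?thesis
      by (rule node_to_prob[OF fin EV n100 x0]) (rule dir_node[OF fin EV n100], assumption+, rule refl)
  qed
next
  fix V :: "'a set" and E and S0 :: "'a state"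
  assume fin: "finite V" and EV: "E \<subseteq> V \<times> V" and und: "undirected E"
  show "conv_prob V E S0 (20 * real (card V) * log 2 (real (card V))) \<ge> 1 - 100 / (real (card V) + 1)"
  proof (cases "card V < 100")
    case True then show ?thesis by (rule small_case)
  next
    case False
    hence n100: "100 \<le> card V" by simp
    have "0 \<le> log 2 (real (card V))" using n100 by simp
    hence x0: "0 \<le> 20 * real (card V) * log 2 (real (card V))" by simp
    show ?thesis
      by (rule node_to_prob[OF fin EV n100 x0]) (rule und_node[OF fin EV n100 und], assumption+, rule refl)
  qed
qed

end
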